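(* Let $\ell$ be a Lyndon word with $|\ell|\ge2$, let $u$ be a word or $u=\infty$, and let $\ell=r_js_js_{j-1}\cdots s_1$ be the iterated standard factorization of $\ell$ with respect to $u$. Then $$r_j<\ell<s_1\le s_2\le\dots\le s_{j-1}\le s_j.$$
   Context: Words are finite sequences over a totally ordered alphabet, compared in lexicographic order (a proper prefix is smaller than the word); $\infty$ is a formal symbol with $w<\infty$ for every word $w$. A Lyndon word is a nonempty word strictly smaller than each of its proper nonempty suffixes. A word is even/odd if its length is. For a Lyndon word $\ell$ with $|\ell|\ge2$ and $u$ a word or $\infty$, the iterated standard factorization (ISF) of $\ell$ with respect to $u$ is the unique factorization $\ell=r_js_js_{j-1}\cdots s_1$, $j\ge1$, such that: (a) for every $i\in[j]$, $s_i$ is the lexicographically smallest proper nonempty suffix of $r_js_js_{j-1}\cdots s_i$; (b) for every $i\in[j-1]$, $s_i$ has even length and $s_i<u$; (c) $s_j$ has odd length or $u\le s_j$. (It is obtained by repeatedly removing the smallest proper suffix of the remaining word, which stays Lyndon, until the removed suffix fails condition (b).) *)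

theory Defs
  imports Main
begin

text \<open>Words over a totally ordered alphabet are lists over a linorder type; they are
compared by the lexicographic order lexordp (a proper prefix is smaller) and its
reflexive version lexordp_eq.\<close>

abbreviation lex_less :: "'a::linorder list \<Rightarrow> 'a list \<Rightarrow> bool" where
  "lex_less \<equiv> lexordp (<)"

abbreviation lex_le :: "'a::linorder list \<Rightarrow> 'a list \<Rightarrow> bool" where
  "lex_le \<equiv> lexordp_eq"

datatype 'a word_or_inf = Word "'a list" | Infty

definition less_wi :: "'a::linorder list \<Rightarrow> 'a word_or_inf \<Rightarrow> bool" where
  "less_wi w u = (case u of Infty \<Rightarrow> True | Word v \<Rightarrow> lex_less w v)"

definition lyndon :: "'a::linorder list \<Rightarrow> bool" where
  "lyndon w \<longleftrightarrow> w \<noteq> [] \<and> (\<forall>i. 0 < i \<and> i < length w \<longrightarrow> lex_less w (drop i w))"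

definition smallest_proper_suffix :: "'a::linorder list \<Rightarrow> 'a list \<Rightarrow> bool" where
  "smallest_proper_suffix w s \<longleftrightarrow>
     (\<exists>i. 0 < i \<and> i < length w \<and> s = drop i w) \<and>
     (\<forall>i. 0 < i \<and> i < length w \<longrightarrow> lex_le s (drop i w))"

text \<open>Iterated standard factorization  l = r s_j s_(j-1) ... s_1  with respect to u.
The list ss = [s_1, ..., s_j] (so ss ! (i-1) = s_i), j = length ss.\<close>
definition is_ISF :: "'a::linorder list \<Rightarrow> 'a word_or_inf \<Rightarrow> 'a list \<Rightarrow> 'a list list \<Rightarrow> bool" where
  "is_ISF l u r ss \<longleftrightarrow>
     ss \<noteq> [] \<and>
     l = r @ concat (rev ss) \<and>
     (\<forall>k < length ss. smallest_proper_suffix (r @ concat (rev (drop k ss))) (ss ! k)) \<and>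
     (\<forall>k < length ss - 1. even (length (ss ! k)) \<and> less_wi (ss ! k) u) \<and>
     (odd (length (last ss)) \<or> \<not> less_wi (last ss) u)"

end

theory Submission
  imports Defs
begin

lemma lexq: "lex_less (x::'a::linorder list) y \<longleftrightarrow> ord_class.lexordp x y"
  by (simp add: List.lexordp_def lexordp_conv_lexord)

lemma lexeq_cancel:
  "lexordp_eq (t @ a) (t @ b) \<Longrightarrow> lexordp_eq (a::'a::linorder list) b"
  by (induct t) auto

lemma step_le:
  fixes w p t s :: "'a::linorder list"
  assumes sm1: "smallest_proper_suffix (p @ s) s"
    and sm2: "smallest_proper_suffix p t"
  shows "lexordp_eq s t"
proof (rule ccontr)
  assume "\<not> lexordp_eq s t"
  hence lt: "ord_class.lexordp t s" using lexordp_eq_linear[of s t] lexordp_conv_lexordp_eq[of t s] by blast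
  obtain i where i: "0 < i" "i < length p" "t = drop i p" using sm2
    unfolding smallest_proper_suffix_def by blast
  have ts: "t @ s = drop i (p @ s)" using i by simp
  have le1: "lexordp_eq s (t @ s)"
    using sm1 i ts unfolding smallest_proper_suffix_def by (metis length_append trans_less_add1)
  have tne: "t \<noteq> []" using i by simp
  from lt[unfolded lexordp_iff] show False
  proof
    assume "\<exists>x vs. s = t @ x # vs"
    then obtain x vs where s: "s = t @ x # vs" by blast
    have "lexordp_eq (t @ (x # vs)) (t @ s)" using le1 s by simp
    hence a: "lexordp_eq (x # vs) s" by (rule lexeq_cancel)
    have "x # vs = drop (length p + length t) (p @ s)" using s by simp
    moreover have "length p + length t < length (p @ s)" using s by simp
    moreover have "0 < length p + length t" using i by simp
    ultimately have b: "lexordp_eq s (x # vs)"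
      using sm1 unfolding smallest_proper_suffix_def by metis
    have "s = x # vs" using a b lexordp_eq_antisym by blast
    thus False using s tne by simp
  next
    assume "\<exists>us a b vs ws. a < b \<and> t = us @ a # vs \<and> s = us @ b # ws"
    then obtain us a b vs ws where h: "a < b" "t = us @ a # vs" "s = us @ b # ws" by blast
    have "ord_class.lexordp (t @ s) s" using h lexordp_append_left_rightI[of a b us "vs @ s" ws] by simp
    thus False using le1 lexordp_conv_lexordp_eq[of "t @ s" s] by blast
  qed
qed

theorem lemma4p19:
  fixes l r :: "'a::linorder list" and u :: "'a word_or_inf" and ss :: "'a list list"
  assumes "lyndon l" and "2 \<le> length l" and "is_ISF l u r ss"
  shows "lex_less r l \<and> lex_less l (ss ! 0) \<and>
         (\<forall>k. k + 1 < length ss \<longrightarrow> lex_le (ss ! k) (ss ! (k + 1)))"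
proof -
  have ne: "ss \<noteq> []" and l: "l = r @ concat (rev ss)"
    and sm: "\<And>k. k < length ss \<Longrightarrow> smallest_proper_suffix (r @ concat (rev (drop k ss))) (ss ! k)"
    using assms(3) unfolding is_ISF_def by auto
  have sm0: "smallest_proper_suffix l (ss ! 0)" using sm[of 0] ne l by simp
  then obtain i where i: "0 < i" "i < length l" "ss ! 0 = drop i l"
    unfolding smallest_proper_suffix_def by blast
  have A: "lex_less l (ss ! 0)" using assms(1) i(1,2) unfolding lyndon_def i(3) by simp
  have "ss ! 0 \<noteq> []" using i by simp
  hence "concat (rev ss) \<noteq> []" using ne by (cases ss) auto
  hence B: "lex_less r l" unfolding lexq l by (rule lexordp_append_rightI)
  have C: "lex_le (ss ! k) (ss ! (k + 1))" if k: "k + 1 < length ss" for k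
  proof -
    have d: "drop k ss = ss ! k # drop (k+1) ss" using k by (simp add: Cons_nth_drop_Suc)
    have "smallest_proper_suffix ((r @ concat (rev (drop (k+1) ss))) @ ss ! k) (ss ! k)"
      using sm[of k] k d by simp
    moreover have "smallest_proper_suffix (r @ concat (rev (drop (k+1) ss))) (ss ! (k+1))"
      using sm[of "k+1"] k by simp
    ultimately show ?thesis by (rule step_le)
  qed
  show ?thesis using A B C by blast
qed

end
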